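(* Under the standing setup with Assumptions 1 and 2, let $\mathcal C_0=\{c\in\mathcal C: w\mapsto w-c(w,z)\text{ is increasing for all }z\in\mathsf Z\}$. Then $\mathcal C_0$ is a closed subset of $(\mathcal C,\rho)$ and $Tc\in\mathcal C_0$ for all $c\in\mathcal C_0$.
   Context: Standing setup. $\mathsf Z$ finite, $\{Z_t\}$ a time-homogeneous Markov chain on $\mathsf Z$ with transition probabilities $P(z,\hat z)$; $\{\epsilon_t\}_{t\ge1}$ i.i.d. with distribution $\pi$, independent of $\{Z_t\}$; for nonnegative measurable $\beta,R,Y$, $\beta_t=\beta(Z_{t-1},Z_t,\epsilon_t)$, $R_t=R(Z_{t-1},Z_t,\epsilon_t)$, $Y_t=Y(Z_{t-1},Z_t,\epsilon_t)$. $u:(0,\infty)\times\mathsf Z\to\mathbb R$ with derivative $u'(c,z)$ in $c$. $\mathbb E_z$: expectation given $Z_0=z$; under $\mathbb E_z$, $\hat Z=Z_1$, $\hat\beta=\beta(z,\hat Z,\epsilon_1)$, $\hat R=R(z,\hat Z,\epsilon_1)$, $\hat Y=Y(z,\hat Z,\epsilon_1)$. $S_0=(0,\infty)\times\mathsf Z$. Assumption 1: for every $z$, $u(\cdot,z)$ twice differentiable on $(0,\infty)$, $u'>0$, $u''<0$, $u'(c,z)\to\infty$ as $c\to0$, $\lim_{c\to\infty}u'(c,z)<1$. Assumption 2: (a) $\mathbb E_zu'(\hat Y,\hat Z)<\infty$ and $\mathbb E_z\hat\beta\hat Ru'(\hat Y,\hat Z)<\infty$ for all $z$; (b) $r(K(1))<1$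 ($r$ = spectral radius), where $K_{z\hat z}(\theta)=P(z,\hat z)\int\beta(z,\hat z,\epsilon)R(z,\hat z,\epsilon)^\theta\pi(d\epsilon)$. $\mathcal C$: continuous $c:S_0\to\mathbb R_+$, increasing in $w$, $0<c(w,z)\le w$, with $\sup_{S_0}|u'(c(w,z),z)-u'(w,z)|<\infty$; $\rho(c_1,c_2)=\sup_{S_0}|u'(c_1(w,z),z)-u'(c_2(w,z),z)|$. $T$: $Tc(w,z)$ is the unique $\xi\in(0,w]$ with $u'(\xi,z)=\max\{\mathbb E_z\hat\beta\hat Ru'(c(\hat R(w-\xi)+\hat Y,\hat Z),\hat Z),u'(w,z)\}$. *)

theory Defs
  imports "HOL-Probability.Probability"
begin

definition spec_radius :: "real^'n^'n \<Rightarrow> real" where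
  "spec_radius A = Max {cmod l | l. \<exists>v::complex^'n. v \<noteq> 0 \<and>
       (\<chi> i j. complex_of_real (A $ i $ j)) *v v = (\<chi> i. l * v $ i)}"

text \<open>Conditional expectation E_z f(Z_1, eps_1) given Z_0 = z:
  sum over the next state weighted by P, integral over eps w.r.t. Pe.\<close>
definition Ez :: "('z::finite \<Rightarrow> 'z \<Rightarrow> real) \<Rightarrow> 'e measure \<Rightarrow> 'z \<Rightarrow> ('z \<Rightarrow> 'e \<Rightarrow> real) \<Rightarrow> real" where
  "Ez P Pe z f = (\<Sum>zh\<in>UNIV. P z zh * (\<integral>e. f zh e \<partial>Pe))"

text \<open>The class C (functions c(w,z), only their values on S_0 = (0,inf) x Z matter).\<close>
definition classC :: "(real \<Rightarrow> 'z \<Rightarrow> real) \<Rightarrow> (real \<Rightarrow> 'z \<Rightarrow> real) set" where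
  "classC du = {c. (\<forall>z. continuous_on {0<..} (\<lambda>w. c w z))
      \<and> (\<forall>z. mono_on {0<..} (\<lambda>w. c w z))
      \<and> (\<forall>w z. 0 < w \<longrightarrow> 0 < c w z \<and> c w z \<le> w)
      \<and> (\<exists>M. \<forall>w z. 0 < w \<longrightarrow> \<bar>du (c w z) z - du w z\<bar> \<le> M)}"

definition rho :: "(real \<Rightarrow> 'z \<Rightarrow> real) \<Rightarrow> (real \<Rightarrow> 'z \<Rightarrow> real) \<Rightarrow> (real \<Rightarrow> 'z \<Rightarrow> real) \<Rightarrow> real" where
  "rho du c1 c2 = (SUP p\<in>{0<..} \<times> UNIV. \<bar>du (c1 (fst p) (snd p)) (snd p) - du (c2 (fst p) (snd p)) (snd p)\<bar>)"

definition classC0 :: "(real \<Rightarrow> 'z \<Rightarrow> real) \<Rightarrow> (real \<Rightarrow> 'z \<Rightarrow> real) set" where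
  "classC0 du = {c \<in> classC du. \<forall>z. mono_on {0<..} (\<lambda>w. w - c w z)}"

definition Top :: "('z::finite \<Rightarrow> 'z \<Rightarrow> real) \<Rightarrow> 'e measure \<Rightarrow>
    ('z \<Rightarrow> 'z \<Rightarrow> 'e \<Rightarrow> real) \<Rightarrow> ('z \<Rightarrow> 'z \<Rightarrow> 'e \<Rightarrow> real) \<Rightarrow> ('z \<Rightarrow> 'z \<Rightarrow> 'e \<Rightarrow> real) \<Rightarrow>
    (real \<Rightarrow> 'z \<Rightarrow> real) \<Rightarrow> (real \<Rightarrow> 'z \<Rightarrow> real) \<Rightarrow> real \<Rightarrow> 'z \<Rightarrow> real" where
  "Top P Pe beta R Y du c = (\<lambda>w z. THE \<xi>. 0 < \<xi> \<and> \<xi> \<le> w \<and>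
      du \<xi> z = max (Ez P Pe z (\<lambda>zh e. beta z zh e * R z zh e *
                        du (c (R z zh e * (w - \<xi>) + Y z zh e) zh) zh))
                    (du w z))"

end

theory Submission
  imports Defs
begin

locale LB =
  fixes P :: "'z::finite \<Rightarrow> 'z \<Rightarrow> real"
    and Pe :: "'e measure"
    and beta R Y :: "'z \<Rightarrow> 'z \<Rightarrow> 'e \<Rightarrow> real"
    and du ddu :: "real \<Rightarrow> 'z \<Rightarrow> real"
  assumes P_nonneg: "\<And>z zh. 0 \<le> P z zh"
    and meas: "\<And>z zh. (\<lambda>e. beta z zh e) \<in> borel_measurable Pe"
              "\<And>z zh. (\<lambda>e. R z zh e) \<in> borel_measurable Pe"
              "\<And>z zh. (\<lambda>e. Y z zh e) \<in> borel_measurable Pe"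
    and nonneg: "\<And>z zh e. 0 \<le> beta z zh e" "\<And>z zh e. 0 \<le> R z zh e" "\<And>z zh e. 0 \<le> Y z zh e"
    and du_deriv: "\<And>c z. 0 < c \<Longrightarrow> ((\<lambda>x. du x z) has_real_derivative ddu c z) (at c)"
    and du_pos: "\<And>c z. 0 < c \<Longrightarrow> 0 < du c z"
    and ddu_neg: "\<And>c z. 0 < c \<Longrightarrow> ddu c z < 0"
    and du_inada0: "\<And>z. filterlim (\<lambda>c. du c z) at_top (at_right 0)"
    and Y_pos: "\<And>z zh. 0 < P z zh \<Longrightarrow> AE e in Pe. 0 < Y z zh e"
    and A2a2: "\<And>z zh. 0 < P z zh \<Longrightarrow>
                 integrable Pe (\<lambda>e. beta z zh e * R z zh e * du (Y z zh e) zh)"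
    and K_int: "\<And>z zh. 0 < P z zh \<Longrightarrow> integrable Pe (\<lambda>e. beta z zh e * R z zh e)"
begin

lemma du_strict: "0 < a \<Longrightarrow> a < b \<Longrightarrow> du b z < du a z"
  by (rule DERIV_neg_imp_decreasing[of a b "\<lambda>x. du x z"]) (auto intro!: exI du_deriv ddu_neg)

lemma du_mono: "0 < a \<Longrightarrow> a \<le> b \<Longrightarrow> du b z \<le> du a z"
  using du_strict[of a b z] by (cases "a = b") auto

lemma du_cont: "continuous_on {0<..} (\<lambda>x. du x z)"
  by (rule continuous_at_imp_continuous_on) (auto intro: DERIV_isCont du_deriv)

lemma du_inv: assumes "0 < t" "0 < d"
  shows "\<exists>\<epsilon>>0. \<forall>s>0. \<bar>du s z - du t z\<bar> < \<epsilon> \<longrightarrow> \<bar>s - t\<bar> < d"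
proof -
  define d' where "d' = min d (t/2)"
  have d': "0 < d'" "d' \<le> d" "d' < t" using assms by (auto simp: d'_def)
  define \<epsilon> where "\<epsilon> = min (du (t - d') z - du t z) (du t z - du (t + d') z)"
  have "0 < \<epsilon>" unfolding \<epsilon>_def using du_strict[of "t - d'" t z] du_strict[of t "t + d'" z] d' assms by auto
  moreover have "\<bar>s - t\<bar> < d" if "s > 0" "\<bar>du s z - du t z\<bar> < \<epsilon>" for s
  proof (rule ccontr)
    assume "\<not> ?thesis"
    then have "s \<ge> t + d' \<or> s \<le> t - d'" using d' by auto
    then show False
    proof
      assume "s \<ge> t + d'" then have "du s z \<le> du (t + d') z" using du_mono[of "t+d'" s z] d' assms by auto
      then show False using that unfolding \<epsilon>_def by auto
    next
      assume "s \<le> t - d'" then have "du (t - d') z \<le> du s z" using du_mono[of s "t-d'" z] that by auto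
      then show False using that unfolding \<epsilon>_def by auto
    qed
  qed
  ultimately show ?thesis by blast
qed

lemma classC_D:
  assumes "c \<in> classC du"
  shows "\<And>z. continuous_on {0<..} (\<lambda>w. c w z)" "\<And>z. mono_on {0<..} (\<lambda>w. c w z)"
    "\<And>w z. 0 < w \<Longrightarrow> 0 < c w z" "\<And>w z. 0 < w \<Longrightarrow> c w z \<le> w"
    "\<exists>M. \<forall>w z. 0 < w \<longrightarrow> \<bar>du (c w z) z - du w z\<bar> \<le> M"
  using assms unfolding classC_def by auto

lemma rho_le:
  assumes "c1 \<in> classC du" "c2 \<in> classC du" "0 < w"
  shows "\<bar>du (c1 w z) z - du (c2 w z) z\<bar> \<le> rho du c1 c2"
proof -
  obtain M1 where M1: "\<forall>w z. 0 < w \<longrightarrow> \<bar>du (c1 w z) z - du w z\<bar> \<le> M1" using classC_D(5)[OF assms(1)] by blast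
  obtain M2 where M2: "\<forall>w z. 0 < w \<longrightarrow> \<bar>du (c2 w z) z - du w z\<bar> \<le> M2" using classC_D(5)[OF assms(2)] by blast
  have bdd: "bdd_above ((\<lambda>p. \<bar>du (c1 (fst p) (snd p)) (snd p) - du (c2 (fst p) (snd p)) (snd p)\<bar>) ` ({0<..} \<times> UNIV))"
  proof (rule bdd_aboveI2)
    fix p :: "real \<times> 'z" assume "p \<in> {0<..} \<times> UNIV"
    then have "0 < fst p" by auto
    then show "\<bar>du (c1 (fst p) (snd p)) (snd p) - du (c2 (fst p) (snd p)) (snd p)\<bar> \<le> M1 + M2"
      using M1[rule_format, of "fst p" "snd p"] M2[rule_format, of "fst p" "snd p"] by linarith
  qed
  show ?thesis unfolding rho_def
    by (rule cSUP_upper2[OF bdd, of "(w,z)"]) (use assms in auto)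
qed

lemma closed_part:
  assumes c: "c \<in> classC du" and appr: "\<forall>\<epsilon>>0. \<exists>c' \<in> classC0 du. rho du c' c < \<epsilon>"
  shows "c \<in> classC0 du"
proof -
  have "mono_on {0<..} (\<lambda>w. w - c w z)" for z
  proof (rule mono_onI)
    fix w1 w2 :: real assume w: "w1 \<in> {0<..}" "w2 \<in> {0<..}" "w1 \<le> w2"
    show "w1 - c w1 z \<le> w2 - c w2 z"
    proof (rule ccontr)
      assume "\<not> ?thesis"
      define d where "d = ((c w2 z - c w1 z) - (w2 - w1)) / 3"
      have d: "0 < d" using \<open>\<not> _\<close> unfolding d_def by auto
      have p1: "0 < c w1 z" "0 < c w2 z" using classC_D(3)[OF c] w by auto
      obtain e1 where e1: "e1 > 0" "\<forall>s>0. \<bar>du s z - du (c w1 z) z\<bar> < e1 \<longrightarrow> \<bar>s - c w1 z\<bar> < d"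
        using du_inv[OF p1(1) d] by blast
      obtain e2 where e2: "e2 > 0" "\<forall>s>0. \<bar>du s z - du (c w2 z) z\<bar> < e2 \<longrightarrow> \<bar>s - c w2 z\<bar> < d"
        using du_inv[OF p1(2) d] by blast
      obtain c' where c': "c' \<in> classC0 du" "rho du c' c < min e1 e2" using appr e1 e2
        by (metis min_less_iff_conj)
      have c'C: "c' \<in> classC du" using c' unfolding classC0_def by auto
      have "\<bar>c' w1 z - c w1 z\<bar> < d" using e1(2) rho_le[OF c'C c, of w1 z] c'(2) classC_D(3)[OF c'C, of w1 z] w by auto
      moreover have "\<bar>c' w2 z - c w2 z\<bar> < d" using e2(2) rho_le[OF c'C c, of w2 z] c'(2) classC_D(3)[OF c'C, of w2 z] w by auto
      moreover have "w1 - c' w1 z \<le> w2 - c' w2 z" using c'(1) w unfolding classC0_def mono_on_def by auto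
      ultimately show False using d unfolding d_def abs_less_iff
        by simp
    qed
  qed
  then show ?thesis using c unfolding classC0_def by auto
qed

definition F :: "(real \<Rightarrow> 'z \<Rightarrow> real) \<Rightarrow> 'z \<Rightarrow> 'z \<Rightarrow> real \<Rightarrow> 'e \<Rightarrow> real" where
  "F c z zh x e = beta z zh e * R z zh e * du (c (R z zh e * x + Y z zh e) zh) zh"

definition G :: "(real \<Rightarrow> 'z \<Rightarrow> real) \<Rightarrow> 'z \<Rightarrow> real \<Rightarrow> real" where
  "G c z x = Ez P Pe z (\<lambda>zh e. F c z zh x e)"

lemma Top_eq: "Top P Pe beta R Y du c w z =
   (THE \<xi>. 0 < \<xi> \<and> \<xi> \<le> w \<and> du \<xi> z = max (G c z (w - \<xi>)) (du w z))"
  by (simp add: Top_def G_def F_def)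

context
  fixes c assumes c: "c \<in> classC du"
begin

definition "Mc = (SOME M. \<forall>w z. 0 < w \<longrightarrow> \<bar>du (c w z) z - du w z\<bar> \<le> M)"

lemma Mc: "0 < w \<Longrightarrow> \<bar>du (c w z) z - du w z\<bar> \<le> Mc"
  using someI_ex[OF classC_D(5)[OF c]] unfolding Mc_def by blast

lemma phi_cont: "continuous_on {0<..} (\<lambda>t. du (c t zh) zh)"
  by (rule continuous_on_compose2[OF du_cont classC_D(1)[OF c]]) (use classC_D(3)[OF c] in auto)

lemma F_meas: assumes "0 \<le> x" shows "F c z zh x \<in> borel_measurable Pe"
proof -
  define psi where "psi = (\<lambda>t::real. if t \<in> {0<..} then du (c t zh) zh else du (c 0 zh) zh)"
  have psi: "psi \<in> borel_measurable borel" unfolding psi_def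
    by (rule borel_measurable_continuous_on_if) (auto intro: phi_cont continuous_on_const)
  have arg: "(\<lambda>e. R z zh e * x + Y z zh e) \<in> borel_measurable Pe"
    using meas by (intro borel_measurable_add borel_measurable_times) auto
  have "(\<lambda>e. psi (R z zh e * x + Y z zh e)) \<in> borel_measurable Pe"
    using measurable_compose[OF arg psi] by (simp add: o_def)
  moreover have "psi (R z zh e * x + Y z zh e) = du (c (R z zh e * x + Y z zh e) zh) zh" for e
  proof -
    have "0 \<le> R z zh e * x + Y z zh e" using nonneg assms by (simp add: add_nonneg_nonneg)
    then show ?thesis unfolding psi_def by (cases "R z zh e * x + Y z zh e = 0") auto
  qed
  ultimately have "(\<lambda>e. du (c (R z zh e * x + Y z zh e) zh) zh) \<in> borel_measurable Pe" by simp
  then show ?thesis unfolding F_def using meas by (intro borel_measurable_times) auto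
qed

definition "bnd z zh e = beta z zh e * R z zh e * du (Y z zh e) zh + Mc * (beta z zh e * R z zh e)"

lemma bnd_int: "0 < P z zh \<Longrightarrow> integrable Pe (bnd z zh)"
  unfolding bnd_def using A2a2 K_int by auto

lemma F_pt: assumes "0 < Y z zh e" "0 \<le> x"
  shows "0 \<le> F c z zh x e" "F c z zh x e \<le> bnd z zh e"
proof -
  let ?t = "R z zh e * x + Y z zh e"
  have "0 \<le> R z zh e * x" using nonneg(2)[of z zh e] assms by simp
  then have t: "Y z zh e \<le> ?t" "0 < ?t" using assms by auto
  have "0 < c ?t zh" using classC_D(3)[OF c t(2)] .
  then have "0 < du (c ?t zh) zh" by (rule du_pos)
  then show "0 \<le> F c z zh x e" unfolding F_def using nonneg by simp
  have "du (c ?t zh) zh \<le> du ?t zh + Mc" using Mc[OF t(2), of zh] by simp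
  also have "\<dots> \<le> du (Y z zh e) zh + Mc" using du_mono[OF assms(1) t(1)] by simp
  finally have "beta z zh e * R z zh e * du (c ?t zh) zh \<le> beta z zh e * R z zh e * (du (Y z zh e) zh + Mc)"
    using nonneg by (intro mult_left_mono) auto
  then show "F c z zh x e \<le> bnd z zh e" unfolding F_def bnd_def by (simp add: algebra_simps)
qed

lemma F_AE: assumes "0 < P z zh" "0 \<le> x"
  shows "AE e in Pe. norm (F c z zh x e) \<le> bnd z zh e"
  using Y_pos[OF assms(1)] by eventually_elim (use F_pt assms in auto)

lemma F_int: assumes "0 < P z zh" "0 \<le> x" shows "integrable Pe (F c z zh x)"
proof (rule Bochner_Integration.integrable_bound[OF bnd_int[OF assms(1)] F_meas[OF assms(2)]])
  show "AE e in Pe. norm (F c z zh x e) \<le> norm (bnd z zh e)"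
    using F_AE[OF assms] by eventually_elim auto
qed

lemma F_mono: assumes "0 < P z zh" "0 \<le> x" "x \<le> x'"
  shows "integral\<^sup>L Pe (F c z zh x') \<le> integral\<^sup>L Pe (F c z zh x)"
proof (rule integral_mono_AE[OF F_int F_int])
  show "AE e in Pe. F c z zh x' e \<le> F c z zh x e"
    using Y_pos[OF assms(1)]
  proof eventually_elim
    case (elim e)
    let ?t = "R z zh e * x + Y z zh e" and ?t' = "R z zh e * x' + Y z zh e"
    have "0 \<le> R z zh e * x" "R z zh e * x \<le> R z zh e * x'" using nonneg(2)[of z zh e] assms by (auto intro: mult_left_mono)
    then have t: "0 < ?t" "?t \<le> ?t'" using elim by auto
    have "c ?t zh \<le> c ?t' zh" using classC_D(2)[OF c, of zh] t unfolding mono_on_def by auto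
    then have "du (c ?t' zh) zh \<le> du (c ?t zh) zh" using du_mono classC_D(3)[OF c t(1)] by blast
    then show ?case unfolding F_def using nonneg by (intro mult_left_mono) auto
  qed
qed (use assms in auto)

lemma F_cont: assumes "0 < P z zh"
  shows "continuous_on {0..} (\<lambda>x. integral\<^sup>L Pe (F c z zh x))"
proof (rule continuous_on_sequentiallyI)
  fix u :: "nat \<Rightarrow> real" and a assume u: "\<forall>n. u n \<in> {0..}" "a \<in> {0..}" "u \<longlonglongrightarrow> a"
  show "(\<lambda>n. integral\<^sup>L Pe (F c z zh (u n))) \<longlonglongrightarrow> integral\<^sup>L Pe (F c z zh a)"
  proof (rule integral_dominated_convergence[where w="bnd z zh"])
    show "F c z zh a \<in> borel_measurable Pe" using F_meas u by auto
    show "\<And>n. F c z zh (u n) \<in> borel_measurable Pe" using F_meas u by auto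
    show "integrable Pe (bnd z zh)" using bnd_int assms by auto
    show "\<And>n. AE e in Pe. norm (F c z zh (u n) e) \<le> bnd z zh e" using F_AE assms u by auto
    show "AE e in Pe. (\<lambda>n. F c z zh (u n) e) \<longlonglongrightarrow> F c z zh a e"
      using Y_pos[OF assms(1)]
    proof eventually_elim
      case (elim e)
      have lim: "(\<lambda>n. R z zh e * u n + Y z zh e) \<longlonglongrightarrow> R z zh e * a + Y z zh e"
        by (intro tendsto_intros u(3))
      have "0 \<le> R z zh e * a" "\<And>n. 0 \<le> R z zh e * u n" using nonneg(2)[of z zh e] u by auto
      then have l: "R z zh e * a + Y z zh e \<in> {0<..}"
        and ev: "\<forall>\<^sub>F n in sequentially. R z zh e * u n + Y z zh e \<in> {0<..}"
        using elim by (auto intro!: always_eventually add_nonneg_pos)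
      from continuous_on_tendsto_compose[OF phi_cont[of zh] lim l ev]
      have "(\<lambda>n. du (c (R z zh e * u n + Y z zh e) zh) zh) \<longlonglongrightarrow> du (c (R z zh e * a + Y z zh e) zh) zh"
        by simp
      then show ?case unfolding F_def by (intro tendsto_intros)
    qed
  qed
qed

lemma G_mono: assumes "0 \<le> x" "x \<le> x'" shows "G c z x' \<le> G c z x"
  unfolding G_def Ez_def
proof (rule sum_mono)
  fix zh
  show "P z zh * integral\<^sup>L Pe (F c z zh x') \<le> P z zh * integral\<^sup>L Pe (F c z zh x)"
  proof (cases "P z zh = 0")
    case False
    then have "0 < P z zh" using P_nonneg[of z zh] by auto
    then show ?thesis using F_mono[OF _ assms] by (intro mult_left_mono) auto
  qed simp
qed

lemma G_cont: "continuous_on {0..} (G c z)"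
proof -
  have "continuous_on {0..} (\<lambda>x. \<Sum>zh\<in>UNIV. P z zh * integral\<^sup>L Pe (F c z zh x))"
  proof (rule continuous_on_sum)
    fix zh
    show "continuous_on {0..} (\<lambda>x. P z zh * integral\<^sup>L Pe (F c z zh x))"
    proof (cases "P z zh = 0")
      case False
      then have "0 < P z zh" using P_nonneg[of z zh] by auto
      then show ?thesis using F_cont by (intro continuous_on_mult_left) auto
    qed simp
  qed
  then show ?thesis unfolding G_def Ez_def by simp
qed

lemma sol_unique:
  assumes "0 < s1" "s1 < s2" "s2 \<le> w"
    and "du s1 z = max (G c z (w - s1)) (du w z)" "du s2 z = max (G c z (w - s2)) (du w z)"
  shows False
proof -
  have "0 \<le> w - s2" "w - s2 \<le> w - s1" using assms(2,3) by auto
  then have g: "G c z (w - s1) \<le> G c z (w - s2)" by (rule G_mono)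
  have "du s2 z < du s1 z" using du_strict[of s1 s2 z] assms by auto
  then show False using assms(4,5) g by (smt (verit))
qed

lemma sol_ex: assumes "0 < w"
  shows "\<exists>\<xi>. 0 < \<xi> \<and> \<xi> \<le> w \<and> du \<xi> z = max (G c z (w - \<xi>)) (du w z)"
proof -
  define B where "B = max (G c z 0) (du w z)"
  have "eventually (\<lambda>x. B < du x z) (at_right 0)"
    using du_inada0[of z] unfolding filterlim_at_top_dense by blast
  then obtain b where b: "b > 0" "\<And>y. 0 < y \<Longrightarrow> y < b \<Longrightarrow> B < du y z"
    unfolding eventually_at_right_field by auto
  define a where "a = b / 2"
  have a: "0 < a" "B < du a z" using b unfolding a_def by auto
  have aw: "a < w"
  proof (rule ccontr)
    assume "\<not> a < w" then have "du a z \<le> du w z" using du_mono assms by auto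
    then show False using a unfolding B_def by auto
  qed
  define h where "h = (\<lambda>\<xi>. du \<xi> z - max (G c z (w - \<xi>)) (du w z))"
  have "\<exists>x. a \<le> x \<and> x \<le> w \<and> h x = 0"
  proof (rule IVT2')
    show "h w \<le> 0" unfolding h_def by simp
    have "G c z (w - a) \<le> G c z 0" by (rule G_mono) (use aw in auto)
    then show "0 \<le> h a" using a unfolding h_def B_def by auto
    show "a \<le> w" using aw by simp
    have c1: "continuous_on {a..w} (\<lambda>\<xi>. du \<xi> z)"
      by (rule continuous_on_subset[OF du_cont]) (use a in auto)
    have c2: "continuous_on {a..w} (\<lambda>\<xi>. G c z (w - \<xi>))"
      by (rule continuous_on_compose2[OF G_cont]) (auto intro!: continuous_intros)
    show "continuous_on {a..w} h" unfolding h_def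
      by (intro continuous_on_diff continuous_on_max c1 c2 continuous_on_const)
  qed
  then obtain x where "a \<le> x" "x \<le> w" "h x = 0" by blast
  then show ?thesis using a unfolding h_def by (intro exI[of _ x]) auto
qed

lemma T_prop: assumes "0 < w"
  shows "0 < Top P Pe beta R Y du c w z" "Top P Pe beta R Y du c w z \<le> w"
    "du (Top P Pe beta R Y du c w z) z = max (G c z (w - Top P Pe beta R Y du c w z)) (du w z)"
proof -
  have ex1: "\<exists>!\<xi>. 0 < \<xi> \<and> \<xi> \<le> w \<and> du \<xi> z = max (G c z (w - \<xi>)) (du w z)"
  proof (rule ex_ex1I)
    show "\<exists>\<xi>. 0 < \<xi> \<and> \<xi> \<le> w \<and> du \<xi> z = max (G c z (w - \<xi>)) (du w z)" using sol_ex[OF assms] .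
  next
    fix s1 s2
    assume s: "0 < s1 \<and> s1 \<le> w \<and> du s1 z = max (G c z (w - s1)) (du w z)"
      "0 < s2 \<and> s2 \<le> w \<and> du s2 z = max (G c z (w - s2)) (du w z)"
    show "s1 = s2"
    proof (rule ccontr)
      assume "s1 \<noteq> s2"
      then have "s1 < s2 \<or> s2 < s1" by auto
      then show False using sol_unique[of s1 s2 w] sol_unique[of s2 s1 w] s by auto
    qed
  qed
  from theI'[OF ex1] show "0 < Top P Pe beta R Y du c w z" "Top P Pe beta R Y du c w z \<le> w"
    "du (Top P Pe beta R Y du c w z) z = max (G c z (w - Top P Pe beta R Y du c w z)) (du w z)"
    unfolding Top_eq by auto
qed

lemma T_mono: assumes "0 < w1" "w1 \<le> w2"
  shows "Top P Pe beta R Y du c w1 z \<le> Top P Pe beta R Y du c w2 z"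
proof (rule ccontr)
  define x1 where "x1 = Top P Pe beta R Y du c w1 z"
  define x2 where "x2 = Top P Pe beta R Y du c w2 z"
  have w2: "0 < w2" using assms by auto
  note p1 = T_prop[OF assms(1), of z, folded x1_def] and p2 = T_prop[OF w2, of z, folded x2_def]
  assume "\<not> ?thesis" then have lt: "x2 < x1" unfolding x1_def x2_def by auto
  have "0 \<le> w1 - x1" "w1 - x1 \<le> w2 - x2" using p1 lt assms by auto
  then have g: "G c z (w2 - x2) \<le> G c z (w1 - x1)" by (rule G_mono)
  have "du w2 z \<le> du w1 z" using du_mono assms by auto
  moreover have "du x1 z < du x2 z" using du_strict[of x2 x1 z] p2 lt by auto
  ultimately show False using p1(3) p2(3) g by (smt (verit))
qed

lemma T_mono2: assumes "0 < w1" "w1 \<le> w2"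
  shows "w1 - Top P Pe beta R Y du c w1 z \<le> w2 - Top P Pe beta R Y du c w2 z"
proof (rule ccontr)
  define x1 where "x1 = Top P Pe beta R Y du c w1 z"
  define x2 where "x2 = Top P Pe beta R Y du c w2 z"
  have w2: "0 < w2" using assms by auto
  note p1 = T_prop[OF assms(1), of z, folded x1_def] and p2 = T_prop[OF w2, of z, folded x2_def]
  assume "\<not> ?thesis" then have lt: "w2 - x2 < w1 - x1" unfolding x1_def x2_def by auto
  have "0 \<le> w2 - x2" "w2 - x2 \<le> w1 - x1" using p2 lt by auto
  then have g: "G c z (w1 - x1) \<le> G c z (w2 - x2)" by (rule G_mono)
  have "x1 < w1" using p2 lt by auto
  have "x1 < x2" using lt assms by auto
  have "du w1 z < du x1 z" using du_strict[of x1 w1 z] p1 \<open>x1 < w1\<close> by auto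
  moreover have "du x2 z < du x1 z" using du_strict[of x1 x2 z] p1 \<open>x1 < x2\<close> by auto
  ultimately show False using p1(3) p2(3) g by (smt (verit))
qed

lemma T_lip: assumes "0 < w1" "0 < w2"
  shows "\<bar>Top P Pe beta R Y du c w1 z - Top P Pe beta R Y du c w2 z\<bar> \<le> \<bar>w1 - w2\<bar>"
proof (cases "w1 \<le> w2")
  case True
  then show ?thesis using T_mono[OF assms(1) True, of z] T_mono2[OF assms(1) True, of z] by auto
next
  case False
  then have le: "w2 \<le> w1" by auto
  show ?thesis using T_mono[OF assms(2) le, of z] T_mono2[OF assms(2) le, of z] by auto
qed

lemma T_C0: "Top P Pe beta R Y du c \<in> classC0 du"
proof -
  let ?T = "Top P Pe beta R Y du c"
  have cont: "continuous_on {0<..} (\<lambda>w. ?T w z)" for z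
    unfolding continuous_on_iff
  proof (intro ballI allI impI)
    fix x e :: real assume x: "x \<in> {0<..}" and e: "0 < e"
    have "\<forall>x'\<in>{0<..}. dist x' x < e \<longrightarrow> dist (?T x' z) (?T x z) < e"
    proof (intro ballI impI)
      fix x' :: real assume "x' \<in> {0<..}" "dist x' x < e"
      then show "dist (?T x' z) (?T x z) < e" using T_lip[of x' x z] x unfolding dist_real_def by auto
    qed
    then show "\<exists>d>0. \<forall>x'\<in>{0<..}. dist x' x < d \<longrightarrow> dist (?T x' z) (?T x z) < e"
      using e by blast
  qed
  have mono: "mono_on {0<..} (\<lambda>w. ?T w z)" for z
    by (rule mono_onI) (use T_mono in auto)
  have mono2: "mono_on {0<..} (\<lambda>w. w - ?T w z)" for z
    by (rule mono_onI) (use T_mono2 in auto)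
  define K where "K = (\<Sum>z\<in>UNIV. \<bar>G c z 0\<bar>)"
  have bnd: "\<bar>du (?T w z) z - du w z\<bar> \<le> K" if w: "0 < w" for w z
  proof -
    note p = T_prop[OF w, of z]
    have "G c z (w - ?T w z) \<le> G c z 0" by (rule G_mono) (use p in auto)
    moreover have "\<bar>G c z 0\<bar> \<le> K" unfolding K_def by (rule member_le_sum) auto
    moreover have "0 < du w z" using du_pos w by auto
    ultimately show ?thesis using p(3) by (smt (verit))
  qed
  show ?thesis unfolding classC0_def classC_def
    using cont mono mono2 bnd T_prop by blast
qed

end

end
theorem lemmaB3:
  fixes P :: "'z::finite \<Rightarrow> 'z \<Rightarrow> real"
    and Pe :: "'e measure"
    and beta R Y :: "'z \<Rightarrow> 'z \<Rightarrow> 'e \<Rightarrow> real"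
    and u du ddu :: "real \<Rightarrow> 'z \<Rightarrow> real"
  assumes P_nonneg: "\<And>z zh. 0 \<le> P z zh"
    and P_stoch: "\<And>z. (\<Sum>zh\<in>UNIV. P z zh) = 1"
    and pi_prob: "prob_space Pe"
    and meas: "\<And>z zh. (\<lambda>e. beta z zh e) \<in> borel_measurable Pe"
              "\<And>z zh. (\<lambda>e. R z zh e) \<in> borel_measurable Pe"
              "\<And>z zh. (\<lambda>e. Y z zh e) \<in> borel_measurable Pe"
    and nonneg: "\<And>z zh e. 0 \<le> beta z zh e" "\<And>z zh e. 0 \<le> R z zh e" "\<And>z zh e. 0 \<le> Y z zh e"
    \<comment> \<open>Assumption 1\<close>
    and u_deriv: "\<And>c z. 0 < c \<Longrightarrow> ((\<lambda>x. u x z) has_real_derivative du c z) (at c)"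
    and du_deriv: "\<And>c z. 0 < c \<Longrightarrow> ((\<lambda>x. du x z) has_real_derivative ddu c z) (at c)"
    and du_pos: "\<And>c z. 0 < c \<Longrightarrow> 0 < du c z"
    and ddu_neg: "\<And>c z. 0 < c \<Longrightarrow> ddu c z < 0"
    and du_inada0: "\<And>z. filterlim (\<lambda>c. du c z) at_top (at_right 0)"
    and du_infty: "\<And>z. \<exists>L. L < 1 \<and> ((\<lambda>c. du c z) \<longlongrightarrow> L) at_top"
    \<comment> \<open>Assumption 2(a)\<close>
    and Y_pos: "\<And>z zh. 0 < P z zh \<Longrightarrow> AE e in Pe. 0 < Y z zh e"
    and A2a1: "\<And>z zh. 0 < P z zh \<Longrightarrow> integrable Pe (\<lambda>e. du (Y z zh e) zh)"
    and A2a2: "\<And>z zh. 0 < P z zh \<Longrightarrow>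
                 integrable Pe (\<lambda>e. beta z zh e * R z zh e * du (Y z zh e) zh)"
    \<comment> \<open>Assumption 2(b)\<close>
    and K_int: "\<And>z zh. 0 < P z zh \<Longrightarrow> integrable Pe (\<lambda>e. beta z zh e * R z zh e)"
    and A2b: "spec_radius (\<chi> z zh. P z zh * (\<integral>e. beta z zh e * R z zh e \<partial>Pe)) < 1"
  shows "(\<forall>c \<in> classC du. (\<forall>\<epsilon>>0. \<exists>c' \<in> classC0 du. rho du c' c < \<epsilon>) \<longrightarrow> c \<in> classC0 du)
       \<and> (\<forall>c \<in> classC0 du. Top P Pe beta R Y du c \<in> classC0 du)"
proof -
  interpret LB P Pe beta R Y du ddu
    by (unfold_locales; (rule P_nonneg meas nonneg du_deriv du_pos ddu_neg du_inada0 Y_pos A2a2 K_int)?; assumption)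
  show ?thesis
  proof
    show "\<forall>c \<in> classC du. (\<forall>\<epsilon>>0. \<exists>c' \<in> classC0 du. rho du c' c < \<epsilon>) \<longrightarrow> c \<in> classC0 du"
      using closed_part by blast
    show "\<forall>c \<in> classC0 du. Top P Pe beta R Y du c \<in> classC0 du"
      using T_C0 unfolding classC0_def by blast
  qed
qed

end
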